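(* Consider a system $\Sigma$ undergoing an irreversible isobaric vitrification (cooling) process along a path from an initial equilibrium supercooled-liquid state A at medium temperature $T_{0\text{A}}$ (above the glass-transition onset $T_{0\text{g}}$) to a state $\text{A}_0$ at absolute zero, with no latent heat along the path. Let $S(0)\equiv S_{\text{R}}$ be the entropy of the system at absolute zero (the residual entropy) and let $$S_{\text{expt}}(0)\doteq S(T_{0\text{A}})+\int_{T_{0\text{A}}}^{0} C_P\,\frac{dT_0}{T_0}$$ be the experimentally (calorimetrically) measured, extrapolated entropy at absolute zero. Then $$S_{\text{R}}\equiv S(0)>S_{\text{expt}}(0).$$
   Context: The system $\Sigma$ is in contact with a very large medium $\widetilde{\Sigma}$ that is always in equilibrium at temperature $T_0$ and pressure $P_0$; together they form an isolated system. Every entropy change of the system decomposes as $dS=d_{\text{e}}S+d_{\text{i}}S$, where $d_{\text{e}}S=-d_{\text{e}}Q/T_0\equiv C_P\,dT_0/T_0$ is the entropy exchanged with the medium ($d_{\text{e}}Q$ being the heat given out by the system to the medium at medium temperature $T_0$, and $C_P$ the measured isobaric heat capacity), and $d_{\text{i}}S$ is the entropy generated by irreversible processes inside the system. The second law states $d_{\text{i}}S\ge 0$, with strict inequality $d_{\text{i}}S>0$ for an irreversible process; vitrification (with observation time shorter than the equilibration time below $T_{0\text{g}}$) is an irreversible process. Entropy is treated as a state function of the system's state variables (internal-equilibrium assumption). *)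

theory Defs
  imports "HOL-Analysis.Analysis"
begin

definition oint :: "real \<Rightarrow> real \<Rightarrow> (real \<Rightarrow> real) \<Rightarrow> real" where
  "oint a b f = (if a \<le> b then integral {a..b} f else - integral {b..a} f)"

definition S_expt :: "(real \<Rightarrow> real) \<Rightarrow> (real \<Rightarrow> real) \<Rightarrow> real \<Rightarrow> real" where
  "S_expt S CP T0A = S T0A + oint T0A 0 (\<lambda>T. CP T / T)"

end

theory Submission
  imports Defs
begin

theorem theorem1:
  fixes S CP Si :: "real \<Rightarrow> real" and T0A T0g :: real
  assumes Tg_pos: "0 < T0g" and Tg_A: "T0g < T0A"
    and CP_int: "(\<lambda>T. CP T / T) integrable_on {0..T0A}"
    and Si_start: "Si T0A = 0"
    and balance: "\<And>T. T \<in> {0..T0A} \<Longrightarrow>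
                     S T = S T0A + oint T0A T (\<lambda>x. CP x / x) + Si T"
    and diS_nonneg: "\<And>T1 T2. 0 \<le> T1 \<Longrightarrow> T1 \<le> T2 \<Longrightarrow> T2 \<le> T0A \<Longrightarrow> Si T2 \<le> Si T1"
    and diS_pos_vitrification:
          "\<And>T1 T2. 0 \<le> T1 \<Longrightarrow> T1 < T2 \<Longrightarrow> T2 \<le> T0g \<Longrightarrow> Si T2 < Si T1"
  shows "S 0 > S_expt S CP T0A"
proof -
  have b: "S 0 = S T0A + oint T0A 0 (\<lambda>x. CP x / x) + Si 0"
    using balance[of 0] Tg_pos Tg_A by simp
  have "Si T0g < Si 0" using diS_pos_vitrification[of 0 T0g] Tg_pos by simp
  moreover have "Si T0A \<le> Si T0g" using diS_nonneg[of T0g T0A] Tg_pos Tg_A by simp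
  ultimately have "Si 0 > 0" using Si_start by simp
  thus ?thesis using b unfolding S_expt_def by simp
qed

end
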